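(* Let $\hat\kappa>0$ and $\mathbb{W}\in\mathbb{R}$. For each $\mathbb{W}'\in\mathbb{R}$ let $\alpha^*_{\hat\kappa}(\mathbb{W}')=\mathrm{Prob}(W^*_T<\mathbb{W}')$, where $W^*_T$ is the terminal wealth under an optimal control $\mathcal{P}^*_0$ of $\text{EW-LS}_{t_0}(\mathbb{W}',\hat\kappa)$, and let $\mathcal{D}^+_{LS}=\{(\mathbb{W}',\hat\kappa'):\hat\kappa'>0,\ 0<\alpha^*_{\hat\kappa'}(\mathbb{W}')<1\}$. Suppose $(\mathbb{W},\hat\kappa)\in\mathcal{D}^+_{LS}$ and that the following invertibility assumption holds at $(\mathbb{W},\hat\kappa)$: $\alpha^*_{\hat\kappa}(\cdot)$ is well defined (its value does not depend on the choice of optimal control) and for every $\mathbb{W}'\ne\mathbb{W}$ with $(\mathbb{W}',\hat\kappa)\in\mathcal{D}^+_{LS}$ we have $\alpha^*_{\hat\kappa}(\mathbb{W}')\ne\alpha^*_{\hat\kappa}(\mathbb{W})$. Then, writing $\alpha^*=\alpha^*_{\hat\kappa}(\mathbb{W})$, we have $(\alpha^*,\alpha^*\hat\kappa)\in\{(\alpha,\kappa):0<\alpha<1,\kappa>0\}$, and any solution of $\text{EW-LS}_{t_0}(\mathbb{W},\hat\kappa)$ is a solution of $\text{EW-ES}_{t_0}(\alpha^*,\alpha^*\hat\kappa)$.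
   Context: Decumulation problem on horizon $[0,T]$. Two assets: a stock index and a bond index; $S_t$, $B_t$ denote the real amounts invested, $W_t=S_t+B_t$. Between rebalancing times they evolve without control as jump diffusions $\frac{dS_t}{S_{t^-}}=(\mu^s-\lambda^s\gamma^s)dt+\sigma^s dZ^s+d\big(\sum_{i=1}^{\pi^s_t}(\xi^s_i-1)\big)$, $\frac{dB_t}{B_{t^-}}=(\mu^b-\lambda^b\gamma^b+\mu^b_c\mathbf 1_{\{B_{t^-}<0\}})dt+\sigma^b dZ^b+d\big(\sum_{i=1}^{\pi^b_t}(\xi^b_i-1)\big)$, where $\pi^s,\pi^b$ are Poisson processes with intensities $\lambda^s,\lambda^b$, $\log\xi^{s},\log\xi^b$ are i.i.d. double-exponential jump sizes, $\gamma^{s}=E[\xi^s-1]$, $\gamma^b=E[\xi^b-1]$, $dZ^s dZ^b=\rho_{sb}dt$, and the jump processes are independent of each other and of the Brownian motions. Rebalancing times $t_0=0<t_1<\dots<t_M=T$, equally spaced. At each $t_i$ the investor withdraws $\mathfrak{q}_i$, so $W(t_i^+)=W(t_i^-)-\mathfrak{q}_i$, then sets $S(t_i^+)=\mathfrak{p}_iW(t_i^+)$, $B(t_i^+)=(1-\mathfrak{p}_i)W(t_i^+)$. Controls $(\mathfrak{q}_i,\mathfrak{p}_i)$ are feedback functions of the state $(S(t_i^-),B(t_i^-))$ and $t_i$. Admissibility: for $i<M$, $\mathfrak{q}_i\in[\mathfrak{q}_{\min},\mathfrak{q}_{\max}]$ if $W_i^-\ge\mathfrak{q}_{\max}$ and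 $\mathfrak{q}_i\in[\mathfrak{q}_{\min},\max(\mathfrak{q}_{\min},W_i^-)]$ if $W_i^-<\mathfrak{q}_{\max}$; $\mathfrak{q}_M=0$; $\mathfrak{p}_i\in[0,1]$ if $W_i^+>0$ and $i<M$, $\mathfrak{p}_i=0$ if $W_i^+\le 0$ or $i=M$. $\mathcal{A}$ is the set of admissible controls $\mathcal{P}_0=\{(\mathfrak{q}_i,\mathfrak{p}_i)\}_{i=0}^M$. $E_{\mathcal{P}_0}^{(s,b),t_0^-}$ is expectation under control $\mathcal{P}_0$ given initial state $(S(t_0^-),B(t_0^-))=(s,b)$; $W_T$ is terminal wealth; $\epsilon$ is a fixed real stabilization constant. Standing assumption: the terminal wealth $W_T$ has a continuous distribution. $\text{EW-LS}_{t_0}(\mathbb{W},\hat\kappa)$: $\sup_{\mathcal{P}_0\in\mathcal{A}} E_{\mathcal{P}_0}^{(s,b),t_0^-}\big[\sum_{i=0}^M\mathfrak{q}_i+\hat\kappa\min(W_T-\mathbb{W},0)+\epsilon W_T\big]$. $\text{EW-ES}_{t_0}(\alpha,\kappa)$: $\sup_{\mathcal{P}_0\in\mathcal{A}} E_{\mathcal{P}_0}^{(s,b),t_0^-}\big[\sum_{i=0}^M\mathfrak{q}_i+\kappa\sup_{W'}\big(W'+\tfrac1\alpha\min(W_T-W',0)\big)+\epsilon W_T\big]$, equivalently $\sup_{W'}\sup_{\mathcal{P}_0}E[\sum\mathfrak{q}_i+\kappa(W'+\tfrac1\alpha\min(W_T-W',0))+\epsilon W_T]$; for each $(\alpha,\kappa)$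 the maximizing $W'$ (denoted $\mathbb{W}^*$) is assumed to exist. *)

theory Defs
  imports "HOL-Probability.Probability"
begin

text \<open>M : the underlying probability space; A : the set of admissible controls;
  Qs P : total withdrawals sum_i q_i under control P (random variable);
  WT P : terminal wealth W_T under control P (random variable);
  eps : the stabilization constant.\<close>

definition LS_obj :: "'w measure \<Rightarrow> ('c \<Rightarrow> 'w \<Rightarrow> real) \<Rightarrow> ('c \<Rightarrow> 'w \<Rightarrow> real)
    \<Rightarrow> real \<Rightarrow> real \<Rightarrow> real \<Rightarrow> 'c \<Rightarrow> real" where
  "LS_obj M Qs WT eps Wb kh P =
     (\<integral>\<omega>. Qs P \<omega> + kh * min (WT P \<omega> - Wb) 0 + eps * WT P \<omega> \<partial>M)"

definition LS_opt :: "'w measure \<Rightarrow> 'c set \<Rightarrow> ('c \<Rightarrow> 'w \<Rightarrow> real) \<Rightarrow> ('c \<Rightarrow> 'w \<Rightarrow> real)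
    \<Rightarrow> real \<Rightarrow> real \<Rightarrow> real \<Rightarrow> 'c \<Rightarrow> bool" where
  "LS_opt M A Qs WT eps Wb kh P \<longleftrightarrow>
     P \<in> A \<and> (\<forall>P'\<in>A. LS_obj M Qs WT eps Wb kh P' \<le> LS_obj M Qs WT eps Wb kh P)"

definition ES_inner :: "'w measure \<Rightarrow> ('c \<Rightarrow> 'w \<Rightarrow> real) \<Rightarrow> ('c \<Rightarrow> 'w \<Rightarrow> real)
    \<Rightarrow> real \<Rightarrow> real \<Rightarrow> real \<Rightarrow> real \<Rightarrow> 'c \<Rightarrow> real" where
  "ES_inner M Qs WT eps \<alpha> \<kappa> W' P =
     (\<integral>\<omega>. Qs P \<omega> + \<kappa> * (W' + (1/\<alpha>) * min (WT P \<omega> - W') 0) + eps * WT P \<omega> \<partial>M)"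

definition ES_obj :: "'w measure \<Rightarrow> ('c \<Rightarrow> 'w \<Rightarrow> real) \<Rightarrow> ('c \<Rightarrow> 'w \<Rightarrow> real)
    \<Rightarrow> real \<Rightarrow> real \<Rightarrow> real \<Rightarrow> 'c \<Rightarrow> real" where
  "ES_obj M Qs WT eps \<alpha> \<kappa> P = (SUP W'. ES_inner M Qs WT eps \<alpha> \<kappa> W' P)"

definition ES_opt :: "'w measure \<Rightarrow> 'c set \<Rightarrow> ('c \<Rightarrow> 'w \<Rightarrow> real) \<Rightarrow> ('c \<Rightarrow> 'w \<Rightarrow> real)
    \<Rightarrow> real \<Rightarrow> real \<Rightarrow> real \<Rightarrow> 'c \<Rightarrow> bool" where
  "ES_opt M A Qs WT eps \<alpha> \<kappa> P \<longleftrightarrow>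
     P \<in> A \<and> (\<forall>P'\<in>A. ES_obj M Qs WT eps \<alpha> \<kappa> P' \<le> ES_obj M Qs WT eps \<alpha> \<kappa> P)"

definition prob_below :: "'w measure \<Rightarrow> ('c \<Rightarrow> 'w \<Rightarrow> real) \<Rightarrow> 'c \<Rightarrow> real \<Rightarrow> real" where
  "prob_below M WT P W' = measure M {\<omega> \<in> space M. WT P \<omega> < W'}"

text \<open>alpha*_kh(W') = Prob(W*_T < W') for an optimal control of EW-LS(W', kh)
  (chosen by Hilbert choice; well-definedness is a hypothesis of the theorem).\<close>
definition alpha_star :: "'w measure \<Rightarrow> 'c set \<Rightarrow> ('c \<Rightarrow> 'w \<Rightarrow> real) \<Rightarrow> ('c \<Rightarrow> 'w \<Rightarrow> real)
    \<Rightarrow> real \<Rightarrow> real \<Rightarrow> real \<Rightarrow> real" where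
  "alpha_star M A Qs WT eps kh W' =
     prob_below M WT (SOME P. LS_opt M A Qs WT eps W' kh P) W'"

definition D_LS :: "'w measure \<Rightarrow> 'c set \<Rightarrow> ('c \<Rightarrow> 'w \<Rightarrow> real) \<Rightarrow> ('c \<Rightarrow> 'w \<Rightarrow> real)
    \<Rightarrow> real \<Rightarrow> (real \<times> real) set" where
  "D_LS M A Qs WT eps = {(W', kh'). kh' > 0 \<and> 0 < alpha_star M A Qs WT eps kh' W'
                                     \<and> alpha_star M A Qs WT eps kh' W' < 1}"

end

theory Submission
  imports Defs
begin


lemma int_min0:
  assumes "prob_space M" "integrable M X"
  shows "integrable M (\<lambda>\<omega>. min (X \<omega> - t) 0 :: real)"
proof -
  interpret prob_space M by fact
  have "integrable M (\<lambda>\<omega>. ((X \<omega> - t) - \<bar>X \<omega> - t\<bar>) / 2)"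
    using assms(2) by auto
  moreover have "(\<lambda>\<omega>. ((X \<omega> - t) - \<bar>X \<omega> - t\<bar>) / 2) = (\<lambda>\<omega>. min (X \<omega> - t) 0)"
    by (auto simp: min_def abs_if)
  ultimately show ?thesis by simp
qed

lemma diff_up:
  assumes "prob_space M" "integrable M X" "(d::real) > 0"
  shows "(\<integral>\<omega>. min (X \<omega> - (W + d)) 0 \<partial>M) - (\<integral>\<omega>. min (X \<omega> - W) 0 \<partial>M)
     \<ge> - d * measure M {\<omega>\<in>space M. X \<omega> < W + d}"
proof -
  interpret prob_space M by fact
  have Xm: "X \<in> borel_measurable M" using assms(2) by auto
  let ?S = "{\<omega>\<in>space M. X \<omega> < W + d}"
  have S: "?S \<in> sets M" using Xm by measurable
  have "- d * measure M ?S = (\<integral>\<omega>. - d * indicator ?S \<omega> \<partial>M)"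
    using S by (simp add: integral_indicator Int_absorb2 sets.sets_into_space)
  also have "\<dots> \<le> (\<integral>\<omega>. min (X \<omega> - (W + d)) 0 - min (X \<omega> - W) 0 \<partial>M)"
    apply (rule integral_mono)
    using S assms int_min0[OF assms(1,2)] apply (auto intro!: integrable_mult_right integrable_real_indicator simp: less_top[symmetric])[2]
    using assms(3) by (auto simp: indicator_def min_def)
  also have "\<dots> = (\<integral>\<omega>. min (X \<omega> - (W + d)) 0 \<partial>M) - (\<integral>\<omega>. min (X \<omega> - W) 0 \<partial>M)"
    by (rule Bochner_Integration.integral_diff; rule int_min0[OF assms(1,2)])
  finally show ?thesis .
qed

lemma diff_down:
  assumes "prob_space M" "integrable M X" "(d::real) > 0"
  shows "(\<integral>\<omega>. min (X \<omega> - (W - d)) 0 \<partial>M) - (\<integral>\<omega>. min (X \<omega> - W) 0 \<partial>M)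
     \<ge> d * measure M {\<omega>\<in>space M. X \<omega> < W - d}"
proof -
  interpret prob_space M by fact
  have Xm: "X \<in> borel_measurable M" using assms(2) by auto
  let ?S = "{\<omega>\<in>space M. X \<omega> < W - d}"
  have S: "?S \<in> sets M" using Xm by measurable
  have "d * measure M ?S = (\<integral>\<omega>. d * indicator ?S \<omega> \<partial>M)"
    using S by (simp add: integral_indicator Int_absorb2 sets.sets_into_space)
  also have "\<dots> \<le> (\<integral>\<omega>. min (X \<omega> - (W - d)) 0 - min (X \<omega> - W) 0 \<partial>M)"
    apply (rule integral_mono)
    using S assms int_min0[OF assms(1,2)] apply (auto intro!: integrable_mult_right integrable_real_indicator simp: less_top[symmetric])[2]
    using assms(3) by (auto simp: indicator_def min_def)
  also have "\<dots> = (\<integral>\<omega>. min (X \<omega> - (W - d)) 0 \<partial>M) - (\<integral>\<omega>. min (X \<omega> - W) 0 \<partial>M)"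
    by (rule Bochner_Integration.integral_diff; rule int_min0[OF assms(1,2)])
  finally show ?thesis .
qed



lemma arch1: "(x::real) > 0 \<Longrightarrow> \<exists>n::nat. 1 / (real n + 1) < x"
proof -
  assume "x > 0"
  then obtain n where "inverse (real (Suc n)) < x" using reals_Archimedean by blast
  then show ?thesis by (auto simp: divide_inverse add.commute)
qed

lemma cdf_pin:
  fixes X :: "'w \<Rightarrow> real"
  assumes "prob_space M" "X \<in> borel_measurable M"
    and c: "measure M {\<omega>\<in>space M. X \<omega> = W} = 0"
    and up: "\<And>d. d > 0 \<Longrightarrow> a \<le> measure M {\<omega>\<in>space M. X \<omega> < W + d}"
    and dn: "\<And>d. d > 0 \<Longrightarrow> measure M {\<omega>\<in>space M. X \<omega> < W - d} \<le> a"
  shows "measure M {\<omega>\<in>space M. X \<omega> < W} = a"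
proof -
  interpret prob_space M by fact
  let ?U = "\<lambda>n::nat. {\<omega>\<in>space M. X \<omega> < W + 1 / (real n + 1)}"
  let ?D = "\<lambda>n::nat. {\<omega>\<in>space M. X \<omega> < W - 1 / (real n + 1)}"
  have Us: "range ?U \<subseteq> sets M" using assms(2) by (auto intro!: measurable_sets_borel)
  have Ds: "range ?D \<subseteq> sets M" using assms(2) by auto
  have Ud: "antimono_on UNIV ?U"
  proof (rule monotone_onI)
    fix m n :: nat assume "m \<in> UNIV" "n \<in> UNIV" "m \<le> n"
    then have "1 / (real n + 1) \<le> 1 / (real m + 1)" by (simp add: frac_le)
    then show "?U n \<subseteq> ?U m" by auto
  qed
  have Di: "incseq ?D"
  proof (rule incseq_SucI)
    fix n :: nat
    have "1 / (real (Suc n) + 1) \<le> 1 / (real n + 1)" by (simp add: frac_le)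
    then show "?D n \<subseteq> ?D (Suc n)" by auto
  qed
  have UI: "(\<Inter>n. ?U n) = {\<omega>\<in>space M. X \<omega> \<le> W}"
  proof safe
    fix \<omega> assume h: "\<omega> \<in> (\<Inter>n. ?U n)"
    then show "\<omega> \<in> space M" by auto
    show "X \<omega> \<le> W"
    proof (rule ccontr)
      assume "\<not> X \<omega> \<le> W"
      then have "X \<omega> - W > 0" by simp
      then obtain n :: nat where n: "1 / (real n + 1) < X \<omega> - W"
        using arch1[of "X \<omega> - W"] by blast
      from h have "X \<omega> < W + 1 / (real n + 1)" by auto
      with n show False by simp
    qed
  next
    fix \<omega> n assume "\<omega> \<in> space M" "X \<omega> \<le> W"
    moreover have "0 < 1 / (real n + 1)" by simp
    ultimately show "X \<omega> < W + 1 / (real n + 1)" by linarith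
  qed
  have DU: "(\<Union>n. ?D n) = {\<omega>\<in>space M. X \<omega> < W}"
  proof safe
    fix \<omega> n assume "\<omega> \<in> space M" "X \<omega> < W - 1 / (real n + 1)"
    moreover have "0 < 1 / (real n + 1)" by simp
    ultimately show "X \<omega> < W" by linarith
  next
    fix \<omega> assume h: "\<omega> \<in> space M" "X \<omega> < W"
    then have "W - X \<omega> > 0" by simp
    then obtain n :: nat where n: "1 / (real n + 1) < W - X \<omega>"
      using arch1[of "W - X \<omega>"] by blast
    then have "X \<omega> < W - 1 / (real n + 1)" by linarith
    then show "\<omega> \<in> (\<Union>n. ?D n)" using h by blast
  qed
  have le_split: "measure M {\<omega>\<in>space M. X \<omega> \<le> W} = measure M {\<omega>\<in>space M. X \<omega> < W}"
  proof -
    have e: "{\<omega>\<in>space M. X \<omega> \<le> W} = {\<omega>\<in>space M. X \<omega> < W} \<union> {\<omega>\<in>space M. X \<omega> = W}" by auto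
    have "measure M {\<omega>\<in>space M. X \<omega> \<le> W} = measure M {\<omega>\<in>space M. X \<omega> < W} + measure M {\<omega>\<in>space M. X \<omega> = W}"
      unfolding e by (rule finite_measure_Union) (use assms(2) in auto)
    then show ?thesis using c by simp
  qed
  have L1: "(\<lambda>n. measure M (?U n)) \<longlonglongrightarrow> measure M {\<omega>\<in>space M. X \<omega> < W}"
    using finite_Lim_measure_decseq[OF Us Ud] UI le_split by simp
  have L2: "(\<lambda>n. measure M (?D n)) \<longlonglongrightarrow> measure M {\<omega>\<in>space M. X \<omega> < W}"
    using finite_Lim_measure_incseq[OF Ds Di] DU by simp
  have "a \<le> measure M {\<omega>\<in>space M. X \<omega> < W}"
    by (rule LIMSEQ_le_const[OF L1]) (use up in \<open>auto intro!: exI[of _ 0]\<close>)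
  moreover have "measure M {\<omega>\<in>space M. X \<omega> < W} \<le> a"
    by (rule LIMSEQ_le_const2[OF L2]) (use dn in \<open>auto intro!: exI[of _ 0]\<close>)
  ultimately show ?thesis by simp
qed


theorem proposition2:
  fixes M :: "'w measure" and A :: "'c set" and Qs WT :: "'c \<Rightarrow> 'w \<Rightarrow> real"
    and eps kh Wb :: real
  assumes "prob_space M"
    and "\<And>P. P \<in> A \<Longrightarrow> integrable M (Qs P)"
    and "\<And>P. P \<in> A \<Longrightarrow> integrable M (WT P)"
    and cont: "\<And>P w. P \<in> A \<Longrightarrow> measure M {\<omega> \<in> space M. WT P \<omega> = w} = 0"
    and ES_max_exists: "\<And>\<alpha> \<kappa>. 0 < \<alpha> \<Longrightarrow> \<alpha> < 1 \<Longrightarrow> 0 < \<kappa> \<Longrightarrow>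
           \<exists>Wst. \<forall>W'. (SUP P\<in>A. ES_inner M Qs WT eps \<alpha> \<kappa> W' P)
                        \<le> (SUP P\<in>A. ES_inner M Qs WT eps \<alpha> \<kappa> Wst P)"
    and "kh > 0"
    and LS_exists: "\<And>W'. \<exists>P. LS_opt M A Qs WT eps W' kh P"
    and well_defined: "\<And>W' P1 P2. LS_opt M A Qs WT eps W' kh P1 \<Longrightarrow> LS_opt M A Qs WT eps W' kh P2
           \<Longrightarrow> prob_below M WT P1 W' = prob_below M WT P2 W'"
    and "(Wb, kh) \<in> D_LS M A Qs WT eps"
    and invertible: "\<And>W'. W' \<noteq> Wb \<Longrightarrow> (W', kh) \<in> D_LS M A Qs WT eps \<Longrightarrow>
           alpha_star M A Qs WT eps kh W' \<noteq> alpha_star M A Qs WT eps kh Wb"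
  shows "0 < alpha_star M A Qs WT eps kh Wb \<and> alpha_star M A Qs WT eps kh Wb < 1
         \<and> 0 < alpha_star M A Qs WT eps kh Wb * kh
         \<and> (\<forall>P. LS_opt M A Qs WT eps Wb kh P \<longrightarrow>
              ES_opt M A Qs WT eps (alpha_star M A Qs WT eps kh Wb)
                                   (alpha_star M A Qs WT eps kh Wb * kh) P)"
  proof -
  interpret prob_space M by fact
  note PS = \<open>prob_space M\<close>
  define a where "a = alpha_star M A Qs WT eps kh Wb"
  have a0: "0 < a" and a1: "a < 1" using assms(9) by (auto simp: D_LS_def a_def)
  define k where "k = a * kh"
  have k0: "0 < k" using a0 \<open>kh > 0\<close> by (simp add: k_def)
  define fm where "fm P t = (\<integral>\<omega>. min (WT P \<omega> - t) 0 \<partial>M)" for P t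
  have decomp: "LS_obj M Qs WT eps t kh P = (\<integral>\<omega>. Qs P \<omega> \<partial>M) + kh * fm P t + eps * (\<integral>\<omega>. WT P \<omega> \<partial>M)"
    if P: "P \<in> A" for P t
  proof -
    have iQ: "integrable M (Qs P)" and iW: "integrable M (WT P)" using assms(2,3) P by auto
    have im: "integrable M (\<lambda>\<omega>. min (WT P \<omega> - t) 0)" by (rule int_min0[OF PS iW])
    have "LS_obj M Qs WT eps t kh P =
        (\<integral>\<omega>. Qs P \<omega> + kh * min (WT P \<omega> - t) 0 \<partial>M) + (\<integral>\<omega>. eps * WT P \<omega> \<partial>M)"
      unfolding LS_obj_def
      by (rule Bochner_Integration.integral_add[of M "\<lambda>\<omega>. Qs P \<omega> + kh * min (WT P \<omega> - t) 0" "\<lambda>\<omega>. eps * WT P \<omega>"]) (use iQ iW im in auto)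
    also have "(\<integral>\<omega>. Qs P \<omega> + kh * min (WT P \<omega> - t) 0 \<partial>M) = (\<integral>\<omega>. Qs P \<omega> \<partial>M) + (\<integral>\<omega>. kh * min (WT P \<omega> - t) 0 \<partial>M)"
      by (rule Bochner_Integration.integral_add) (use iQ im in auto)
    finally show ?thesis by (simp add: fm_def)
  qed
  have ESd: "ES_inner M Qs WT eps a k t P = k * t + LS_obj M Qs WT eps t kh P"
    if P: "P \<in> A" for P t
  proof -
    have iQ: "integrable M (Qs P)" and iW: "integrable M (WT P)" using assms(2,3) P by auto
    have im: "integrable M (\<lambda>\<omega>. min (WT P \<omega> - t) 0)" by (rule int_min0[OF PS iW])
    have eq: "(\<lambda>\<omega>. Qs P \<omega> + k * (t + (1/a) * min (WT P \<omega> - t) 0) + eps * WT P \<omega>)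
        = (\<lambda>\<omega>. (Qs P \<omega> + kh * min (WT P \<omega> - t) 0 + eps * WT P \<omega>) + k * t)"
      using a0 by (auto simp: k_def field_simps)
    have "ES_inner M Qs WT eps a k t P = (\<integral>\<omega>. Qs P \<omega> + kh * min (WT P \<omega> - t) 0 + eps * WT P \<omega> \<partial>M) + (\<integral>\<omega>. k * t \<partial>M)"
      unfolding ES_inner_def eq
      by (rule Bochner_Integration.integral_add[of M "\<lambda>\<omega>. Qs P \<omega> + kh * min (WT P \<omega> - t) 0 + eps * WT P \<omega>" "\<lambda>\<omega>. k * t"]) (use iQ iW im in auto)
    then show ?thesis by (simp add: LS_obj_def prob_space)
  qed
  define Popt where "Popt t = (SOME P. LS_opt M A Qs WT eps t kh P)" for t
  have Popt: "LS_opt M A Qs WT eps t kh (Popt t)" for t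
    unfolding Popt_def by (rule someI_ex[OF LS_exists])
  have PoptA: "Popt t \<in> A" for t using Popt[of t] by (simp add: LS_opt_def)
  define h where "h t = (SUP P\<in>A. ES_inner M Qs WT eps a k t P)" for t
  have hval: "h t = k * t + LS_obj M Qs WT eps t kh (Popt t)" for t
    unfolding h_def
  proof (rule cSup_eq_maximum)
    show "k * t + LS_obj M Qs WT eps t kh (Popt t) \<in> (\<lambda>P. ES_inner M Qs WT eps a k t P) ` A"
      using PoptA[of t] ESd[OF PoptA[of t], of t] by (metis image_eqI)
    show "x \<le> k * t + LS_obj M Qs WT eps t kh (Popt t)" if "x \<in> (\<lambda>P. ES_inner M Qs WT eps a k t P) ` A" for x
      using that Popt[of t] ESd by (auto simp: LS_opt_def)
  qed
  have hge: "ES_inner M Qs WT eps a k t P \<le> h t" if "P \<in> A" for P t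
    using that Popt[of t] ESd[OF that] hval[of t] by (auto simp: LS_opt_def)
  obtain Wst where Wst: "\<And>t. h t \<le> h Wst"
    using ES_max_exists[OF a0 a1 k0] unfolding h_def by blast
  define Pst where "Pst = Popt Wst"
  have PstA: "Pst \<in> A" by (simp add: Pst_def PoptA)
  have opt5: "kh * (fm Pst t - fm Pst Wst) \<le> - k * (t - Wst)" for t
  proof -
    have "ES_inner M Qs WT eps a k t Pst \<le> h Wst" using hge[OF PstA] Wst order_trans by blast
    then have "k * t + LS_obj M Qs WT eps t kh Pst \<le> k * Wst + LS_obj M Qs WT eps Wst kh Pst"
      using ESd[OF PstA] hval[of Wst] by (simp add: Pst_def)
    then show ?thesis using decomp[OF PstA] by (simp add: algebra_simps)
  qed
  have iWst: "integrable M (WT Pst)" using assms(3) PstA by auto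
  have up: "a \<le> measure M {\<omega>\<in>space M. WT Pst \<omega> < Wst + d}" if d: "d > 0" for d
  proof -
    let ?F = "measure M {\<omega>\<in>space M. WT Pst \<omega> < Wst + d}"
    have "- d * ?F \<le> fm Pst (Wst + d) - fm Pst Wst"
      using diff_up[OF PS iWst d, of Wst] by (simp add: fm_def)
    then have "kh * (- d * ?F) \<le> kh * (fm Pst (Wst + d) - fm Pst Wst)"
      using \<open>kh > 0\<close> by (intro mult_left_mono) auto
    also have "\<dots> \<le> - k * d" using opt5[of "Wst + d"] by simp
    finally have "(kh * d) * (a - ?F) \<le> 0" by (simp add: k_def algebra_simps)
    moreover have "kh * d > 0" using \<open>kh > 0\<close> d by simp
    ultimately have "a - ?F \<le> 0" by (metis mult_le_cancel_left_pos mult_zero_right)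
    then show ?thesis by simp
  qed
  have dn: "measure M {\<omega>\<in>space M. WT Pst \<omega> < Wst - d} \<le> a" if d: "d > 0" for d
  proof -
    let ?F = "measure M {\<omega>\<in>space M. WT Pst \<omega> < Wst - d}"
    have "d * ?F \<le> fm Pst (Wst - d) - fm Pst Wst"
      using diff_down[OF PS iWst d, of Wst] by (simp add: fm_def)
    then have "kh * (d * ?F) \<le> kh * (fm Pst (Wst - d) - fm Pst Wst)"
      using \<open>kh > 0\<close> by (intro mult_left_mono) auto
    also have "\<dots> \<le> k * d" using opt5[of "Wst - d"] by simp
    finally have "(kh * d) * (?F - a) \<le> 0" by (simp add: k_def algebra_simps)
    moreover have "kh * d > 0" using \<open>kh > 0\<close> d by simp
    ultimately have "?F - a \<le> 0" by (metis mult_le_cancel_left_pos mult_zero_right)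
    then show ?thesis by simp
  qed
  have Fst: "measure M {\<omega>\<in>space M. WT Pst \<omega> < Wst} = a"
    by (rule cdf_pin[OF PS _ cont[OF PstA] up dn]) (use iWst in auto)
  have ast: "alpha_star M A Qs WT eps kh Wst = a"
    using Fst by (simp add: alpha_star_def prob_below_def Pst_def Popt_def)
  have "Wst = Wb"
  proof (rule ccontr)
    assume ne: "Wst \<noteq> Wb"
    have "(Wst, kh) \<in> D_LS M A Qs WT eps" using ast a0 a1 \<open>kh > 0\<close> by (simp add: D_LS_def)
    from invertible[OF ne this] ast show False by (simp add: a_def)
  qed
  have main: "ES_opt M A Qs WT eps a k P" if LP: "LS_opt M A Qs WT eps Wb kh P" for P
  proof -
    have PA: "P \<in> A" using LP by (simp add: LS_opt_def)
    have "LS_obj M Qs WT eps Wb kh P = LS_obj M Qs WT eps Wb kh (Popt Wb)"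
      using LP Popt[of Wb] PA PoptA[of Wb] by (auto simp: LS_opt_def intro: antisym)
    then have hb: "h Wb = ES_inner M Qs WT eps a k Wb P" using hval[of Wb] ESd[OF PA] by simp
    have bnd: "ES_inner M Qs WT eps a k t P' \<le> h Wb" if "P' \<in> A" for P' t
      using hge[OF that, of t] Wst[of t] \<open>Wst = Wb\<close> by simp
    have "ES_obj M Qs WT eps a k P' \<le> ES_obj M Qs WT eps a k P" if P'A: "P' \<in> A" for P'
    proof -
      have "ES_obj M Qs WT eps a k P' \<le> h Wb"
        unfolding ES_obj_def by (rule cSUP_least) (auto intro: bnd[OF P'A])
      also have "h Wb \<le> ES_obj M Qs WT eps a k P"
        unfolding ES_obj_def hb
        by (rule cSUP_upper) (auto intro!: bdd_aboveI2[where M="h Wb"] bnd[OF PA])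
      finally show ?thesis .
    qed
    then show ?thesis using PA by (simp add: ES_opt_def)
  qed
  show ?thesis using a0 a1 k0 main by (simp add: a_def k_def)
qed

end
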